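(* Let $\sigma:\mathbb{R}\to\mathbb{R}$ be either a continuous and strictly monotonic function or the ReLU function $\sigma(t)=\max\{t,0\}$. Let $F:\mathbb{R}^{d_{in}}\to\mathbb{R}^{d_{out}}$ be a neural network function with activation function $\sigma$ and width $\omega_F\le d_{in}$. Then for every $j\in\{1,\dots,d_{out}\}$, every non-empty connected component of the decision region $C_j$ of $F$ is unbounded.
   Context: A neural network function $F:\mathbb{R}^{d_{in}}\to\mathbb{R}^{d_{out}}$ with $L$ layers and activation $\sigma$ has the form $F=W_L\circ A_{L-1}\circ\dots\circ A_1$, where $A_j(x)=\sigma(W_jx+b_j)$ with $W_j\in\mathbb{R}^{d_j\times d_{j-1}}$, $b_j\in\mathbb{R}^{d_j}$, $d_0=d_{in}$, $d_L=d_{out}$, $W_L\in\mathbb{R}^{d_L\times d_{L-1}}$, and $\sigma$ is applied componentwise. The width of $F$ is $\omega_F=\max\{d_j:j=1,\dots,L\}$. Writing $F=(F_1,\dots,F_{d_{out}})$, the decision region of class $j$ is $C_j=\{x\in\mathbb{R}^{d_{in}}:F_j(x)>F_k(x)\text{ for all }k\neq j\}$. A set $C\subset\mathbb{R}^d$ is connected if there are no disjoint open sets $U,V\subset\mathbb{R}^d$ with $C\subset U\cup V$ and $C\cap U$, $C\cap V$ both non-empty; the connected components of an open set are its maximal connected subsets. *)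

theory Defs
  imports "HOL-Analysis.Analysis"
begin

text \<open>Neural networks with explicit layer dimensions d 0, ..., d L (d 0 = d_in, d L = d_out).
  Layer j (1 \<le> j \<le> L) has weight matrix W j :: nat => nat => real (entries W j i k with
  i < d j, k < d (j-1)) and bias b j :: nat => real (entries i < d j).
  Vectors of dimension m are represented as functions nat => real, only indices < m matter.\<close>

definition affine :: "nat \<Rightarrow> (nat \<Rightarrow> nat \<Rightarrow> real) \<Rightarrow> (nat \<Rightarrow> real) \<Rightarrow> (nat \<Rightarrow> real) \<Rightarrow> nat \<Rightarrow> real" where
  "affine m W b v = (\<lambda>i. (\<Sum>k<m. W i k * v k) + b i)"

fun hidden :: "(real \<Rightarrow> real) \<Rightarrow> (nat \<Rightarrow> nat) \<Rightarrow> (nat \<Rightarrow> nat \<Rightarrow> nat \<Rightarrow> real) \<Rightarrow> (nat \<Rightarrow> nat \<Rightarrow> real)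
                \<Rightarrow> nat \<Rightarrow> (nat \<Rightarrow> real) \<Rightarrow> (nat \<Rightarrow> real)" where
  "hidden \<sigma> d W b 0 v = v"
| "hidden \<sigma> d W b (Suc j) v = (\<lambda>i. \<sigma> (affine (d j) (W (Suc j)) (b (Suc j)) (hidden \<sigma> d W b j v) i))"

definition nn_fun :: "(real \<Rightarrow> real) \<Rightarrow> nat \<Rightarrow> (nat \<Rightarrow> nat) \<Rightarrow> (nat \<Rightarrow> nat \<Rightarrow> nat \<Rightarrow> real) \<Rightarrow> (nat \<Rightarrow> nat \<Rightarrow> real)
                \<Rightarrow> (nat \<Rightarrow> real) \<Rightarrow> (nat \<Rightarrow> real)" where
  "nn_fun \<sigma> L d W b v = (\<lambda>i. \<Sum>k< d (L - 1). W L i k * hidden \<sigma> d W b (L - 1) v k)"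

definition nn_width :: "nat \<Rightarrow> (nat \<Rightarrow> nat) \<Rightarrow> nat" where
  "nn_width L d = Max (d ` {1..L})"

text \<open>Input space R^(d_in) is real^'n; coordinates are listed via a bijection
  e : {0..<CARD('n)} -> 'n, giving the input vector (\<lambda>k. x $ e k).\<close>
definition decision_region :: "((real^'n) \<Rightarrow> (nat \<Rightarrow> real)) \<Rightarrow> nat \<Rightarrow> nat \<Rightarrow> (real^'n) set" where
  "decision_region F dout j = {x. \<forall>k<dout. k \<noteq> j \<longrightarrow> F x j > F x k}"

end

theory Submission
  imports Defs
begin


lemma hidden_shift:
  "hidden \<sigma> d W b (Suc j) v = hidden \<sigma> (\<lambda>l. d (Suc l)) (\<lambda>l. W (Suc l)) (\<lambda>l. b (Suc l)) j
      (\<lambda>i. \<sigma> (affine (d 0) (W 1) (b 1) v i))"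
  by (induction j) auto

lemma nn_fun_shift:
  assumes "L' \<ge> 1"
  shows "nn_fun \<sigma> (Suc L') d W b v = nn_fun \<sigma> L' (\<lambda>l. d (Suc l)) (\<lambda>l. W (Suc l)) (\<lambda>l. b (Suc l))
      (\<lambda>i. \<sigma> (affine (d 0) (W 1) (b 1) v i))"
proof -
  obtain m where m: "L' = Suc m" using assms by (cases L') auto
  show ?thesis unfolding nn_fun_def m using hidden_shift[of \<sigma> d W b m v] by simp
qed

lemma hidden_agree:
  assumes "\<forall>k<d 0. v k = v' k"
  shows "\<forall>k<d j. hidden \<sigma> d W b j v k = hidden \<sigma> d W b j v' k"
proof (induction j)
  case 0 then show ?case using assms by simp
next
  case (Suc j)
  then show ?case by (simp add: affine_def)
qed

lemma nn_fun_cong: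
  assumes "\<forall>k<d 0. v k = v' k"
  shows "nn_fun \<sigma> L d W b v = nn_fun \<sigma> L d W b v'"
  unfolding nn_fun_def using hidden_agree[of d v v' "L - 1" \<sigma> W b] assms by simp

lemma cont_hidden:
  fixes e :: "nat \<Rightarrow> 'n::finite"
  assumes "continuous_on UNIV \<sigma>"
  shows "continuous_on UNIV (\<lambda>y::real^'n. hidden \<sigma> d W b j (\<lambda>k. y $ e k) i)"
proof (induction j arbitrary: i)
  case 0 then show ?case by (simp add: linear_continuous_on[OF bounded_linear_vec_nth])
next
  case (Suc j)
  have "continuous_on UNIV (\<lambda>y::real^'n. affine (d j) (W (Suc j)) (b (Suc j)) (hidden \<sigma> d W b j (\<lambda>k. y $ e k)) i)"
    unfolding affine_def by (intro continuous_intros Suc)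
  then show ?case using assms by (simp add: continuous_on_compose2[OF assms])
qed

lemma cont_nn:
  fixes e :: "nat \<Rightarrow> 'n::finite"
  assumes "continuous_on UNIV \<sigma>"
  shows "continuous_on UNIV (\<lambda>y::real^'n. nn_fun \<sigma> L d W b (\<lambda>k. y $ e k) i)"
  unfolding nn_fun_def by (intro continuous_intros cont_hidden assms)

lemma open_region:
  fixes e :: "nat \<Rightarrow> 'n::finite"
  assumes "continuous_on UNIV \<sigma>"
  shows "open (decision_region (\<lambda>y::real^'n. nn_fun \<sigma> L d W b (\<lambda>k. y $ e k)) m j)"
proof -
  have "decision_region (\<lambda>y::real^'n. nn_fun \<sigma> L d W b (\<lambda>k. y $ e k)) m j =
     (\<Inter>k\<in>{k. k<m \<and> k \<noteq> j}. {y. nn_fun \<sigma> L d W b (\<lambda>k. y $ e k) k < nn_fun \<sigma> L d W b (\<lambda>k. y $ e k) j})"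
    unfolding decision_region_def by auto
  also have "open \<dots>"
    by (intro open_INT finite_Collect_conjI ballI open_Collect_less[OF cont_nn[OF assms] cont_nn[OF assms]]) auto
  finally show ?thesis .
qed

lemma unb_comp:
  assumes "connected S" "x \<in> S" "S \<subseteq> R" "\<not> bounded S"
  shows "\<not> bounded (connected_component_set R x)"
  using connected_component_maximal[OF assms(2,1,3)] assms(4) bounded_subset by blast

lemma ray_props:
  fixes p u :: "'a::real_normed_vector"
  assumes "u \<noteq> 0"
  shows "connected ((\<lambda>t. p + t *\<^sub>R u) ` {0..})" "\<not> bounded ((\<lambda>t. p + t *\<^sub>R u) ` {0..})"
proof -
  show "connected ((\<lambda>t. p + t *\<^sub>R u) ` {0..})"
    by (intro connected_continuous_image continuous_intros is_interval_connected) (auto simp: is_interval_def)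
  show "\<not> bounded ((\<lambda>t. p + t *\<^sub>R u) ` {0..})"
  proof
    assume "bounded ((\<lambda>t. p + t *\<^sub>R u) ` {0..})"
    then obtain B where B: "\<And>y. y \<in> (\<lambda>t. p + t *\<^sub>R u) ` {0..} \<Longrightarrow> norm y \<le> B"
      by (auto simp: bounded_iff)
    define t where "t = (B + norm p + 1) / norm u"
    have nu: "norm u > 0" using assms by simp
    have "p \<in> (\<lambda>t. p + t *\<^sub>R u) ` {0..}" by (rule image_eqI[of _ _ 0]) auto
    then have "norm p \<le> B" using B by blast
    then have t0: "t \<ge> 0" unfolding t_def using nu norm_ge_zero[of p] by (intro divide_nonneg_pos; linarith)
    have "t * norm u = B + norm p + 1" unfolding t_def using nu by simp
    moreover have "norm (t *\<^sub>R u) \<le> norm (p + t *\<^sub>R u) + norm p"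
      using norm_triangle_ineq4[of "p + t *\<^sub>R u" p] by simp
    moreover have "norm (p + t *\<^sub>R u) \<le> B" using B t0 by blast
    ultimately show False using t0 by simp
  qed
qed



lemma clopen_comp:
  fixes C :: "'a::real_normed_vector set"
  assumes "open C" "connected C" "open B" "h0 \<in> C" "h0 \<in> B"
    and "C \<inter> closure (connected_component_set (C \<inter> B) h0) \<subseteq> connected_component_set (C \<inter> B) h0"
  shows "connected_component_set (C \<inter> B) h0 = C"
proof -
  let ?D = "connected_component_set (C \<inter> B) h0"
  have DC: "?D \<subseteq> C" using connected_component_subset by blast
  have "open ?D" using assms by (intro open_connected_component open_Int)
  then have o: "openin (top_of_set C) ?D" using DC by (simp add: openin_open_eq assms(1))
  have "?D = C \<inter> closure ?D" using assms(6) DC closure_subset[of ?D] by blast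
  then have "closedin (top_of_set C) ?D"
    unfolding closedin_closed by (intro exI[of _ "closure ?D"]) auto
  moreover have "?D \<noteq> {}" using assms(4,5) by (metis IntI connected_component_eq_empty)
  ultimately show ?thesis using o assms(2) unfolding connected_clopen by blast
qed

lemma closedin_comp_closure:
  assumes "p \<in> S" "p \<in> closure (connected_component_set S x)"
  shows "p \<in> connected_component_set S x"
proof -
  obtain T where "closed T" "connected_component_set S x = S \<inter> T"
    using closedin_connected_component[of S x] unfolding closedin_closed by blast
  then show ?thesis using assms closure_minimal[of "S \<inter> T" T] by auto
qed

lemma mono_step:
  fixes U :: "(real^'n::finite) set" and \<sigma> :: "real \<Rightarrow> real"
  assumes cont: "continuous_on UNIV \<sigma>" and inj: "inj \<sigma>"
    and U: "open U" and comps: "\<forall>h\<in>U. \<not> bounded (connected_component_set U h)"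
    and z0: "(\<chi> i. \<sigma> (z0$i)) \<in> U"
  shows "\<not> bounded (connected_component_set {z. (\<chi> i. \<sigma> (z$i)) \<in> U} z0)"
proof -
  define \<phi> where "\<phi> = (\<lambda>z::real^'n. \<chi> i. \<sigma> (z$i))"
  have contphi: "continuous_on UNIV \<phi>" unfolding \<phi>_def
    by (intro continuous_on_vec_lambda continuous_on_compose2[OF cont linear_continuous_on[OF bounded_linear_vec_nth]]) auto
  have injphi: "inj \<phi>"
  proof
    fix x y assume "\<phi> x = \<phi> y"
    then have "\<sigma> (x$i) = \<sigma> (y$i)" for i unfolding \<phi>_def by (metis vec_lambda_beta)
    then show "x = y" using inj by (simp add: vec_eq_iff inj_eq)
  qed
  obtain \<psi> where hom: "homeomorphism UNIV (range \<phi>) \<phi> \<psi>"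
    using invariance_of_domain_homeomorphism[of UNIV \<phi>] contphi injphi by auto
  define B where "B = range \<phi>"
  have oB: "open B" unfolding B_def using invariance_of_domain[of UNIV \<phi>] contphi injphi by auto
  define h0 where "h0 = \<phi> z0"
  define C where "C = connected_component_set U h0"
  define D where "D = connected_component_set (C \<inter> B) h0"
  have h0U: "h0 \<in> U" using z0 unfolding h0_def \<phi>_def .
  have h0C: "h0 \<in> C" unfolding C_def using h0U by simp
  have h0B: "h0 \<in> B" unfolding B_def h0_def by simp
  have h0D: "h0 \<in> D" unfolding D_def using h0C h0B by simp
  have oC: "open C" unfolding C_def using U by (rule open_connected_component)
  have cC: "connected C" unfolding C_def by simp
  have CU: "C \<subseteq> U" unfolding C_def using connected_component_subset by blast
  have DCB: "D \<subseteq> C \<inter> B" unfolding D_def using connected_component_subset by blast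
  have psicont: "continuous_on B \<psi>" using hom unfolding homeomorphism_def B_def by blast
  have psiphi: "\<psi> (\<phi> x) = x" for x using hom unfolding homeomorphism_def by blast
  have phipsi: "y \<in> B \<Longrightarrow> \<phi> (\<psi> y) = y" for y using hom unfolding homeomorphism_def B_def by blast
  define Z where "Z = \<psi> ` D"
  have cZ: "connected Z" unfolding Z_def D_def
    by (intro connected_continuous_image continuous_on_subset[OF psicont]) (use DCB D_def in auto)
  have z0Z: "z0 \<in> Z" unfolding Z_def using h0D psiphi[of z0] h0_def by force
  have phiZ: "\<phi> ` Z = D" unfolding Z_def image_image using DCB phipsi by (auto simp: image_iff) (metis IntE subsetD)
  have ZO: "Z \<subseteq> {z. \<phi> z \<in> U}" using phiZ DCB CU by blast
  have "\<not> bounded Z"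
  proof
    assume bZ: "bounded Z"
    define K where "K = \<phi> ` closure Z"
    have "compact K" unfolding K_def using bZ
      by (intro compact_continuous_image continuous_on_subset[OF contphi]) (auto simp: compact_closure)
    then have cK: "closed K" "bounded K" by (auto simp: compact_imp_closed compact_imp_bounded)
    have DK: "D \<subseteq> K" unfolding K_def using phiZ closure_subset by blast
    have KB: "K \<subseteq> B" unfolding K_def B_def by auto
    have clD: "closure D \<subseteq> B" using closure_minimal[OF DK cK(1)] KB by blast
    have "C \<inter> closure D \<subseteq> D"
      using closedin_comp_closure[of _ "C \<inter> B" h0] clD unfolding D_def by blast
    then have "D = C" using clopen_comp[OF oC cC oB h0C h0B] unfolding D_def by blast
    then have "bounded C" using DK cK(2) bounded_subset by blast
    then show False using comps h0U unfolding C_def by blast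
  qed
  then show ?thesis using unb_comp[OF cZ z0Z] ZO unfolding \<phi>_def by blast
qed

lemma relu_step:
  fixes U :: "(real^'n::finite) set"
  assumes U: "open U" and comps: "\<forall>h\<in>U. \<not> bounded (connected_component_set U h)"
    and z0: "(\<chi> i. max (z0$i) 0) \<in> U"
  shows "\<not> bounded (connected_component_set {z. (\<chi> i. max (z$i) 0) \<in> U} z0)"
proof -
  define \<phi> where "\<phi> = (\<lambda>z::real^'n. \<chi> i. max (z$i) (0::real))"
  have phiid: "(\<forall>i. 0 \<le> z$i) \<Longrightarrow> \<phi> z = z" for z unfolding \<phi>_def by (simp add: vec_eq_iff)
  have phiray: "p$i \<le> 0 \<Longrightarrow> t \<ge> 0 \<Longrightarrow> \<phi> (p + t *\<^sub>R (- axis i 1)) = \<phi> p" for p i t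
    unfolding \<phi>_def by (auto simp: vec_eq_iff axis_def)
  have ax: "- axis i (1::real) \<noteq> 0" for i :: 'n by (simp add: axis_eq_0_iff)
  show ?thesis
  proof (cases "\<exists>i. z0$i \<le> 0")
    case True
    then obtain i where i: "z0$i \<le> 0" by blast
    define Z where "Z = (\<lambda>t. z0 + t *\<^sub>R (- axis i 1)) ` {0..}"
    have "Z \<subseteq> {z. \<phi> z \<in> U}"
    proof
      fix z assume "z \<in> Z"
      then obtain t where "t \<ge> 0" "z = z0 + t *\<^sub>R (- axis i 1)" unfolding Z_def by auto
      moreover have "\<phi> (z0 + t *\<^sub>R (- axis i 1)) = \<phi> z0" if "t \<ge> 0" for t
        by (rule phiray) (use i that in auto)
      ultimately show "z \<in> {z. \<phi> z \<in> U}" using z0 unfolding \<phi>_def by auto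
    qed
    moreover have "z0 \<in> Z" unfolding Z_def by (rule image_eqI[of _ _ 0]) auto
    ultimately show ?thesis using unb_comp[of Z z0] ray_props[OF ax] unfolding Z_def \<phi>_def by blast
  next
    case False
    then have pos: "\<forall>i. 0 < z0$i" by (meson not_le)
    define Q where "Q = (\<Inter>i. {z::real^'n. 0 < z$i})"
    have oQ: "open Q" unfolding Q_def
      by (intro open_INT ballI open_Collect_less continuous_on_const linear_continuous_on[OF bounded_linear_vec_nth]) auto
    have cQ: "closure Q \<subseteq> {z. \<forall>i. 0 \<le> z$i}"
    proof (rule closure_minimal)
      show "Q \<subseteq> {z. \<forall>i. 0 \<le> z$i}" unfolding Q_def by (auto intro: less_imp_le)
      have "{z::real^'n. \<forall>i. 0 \<le> z$i} = (\<Inter>i. {z. 0 \<le> z$i})" by auto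
      also have "closed \<dots>"
        by (intro closed_INT ballI closed_Collect_le continuous_on_const linear_continuous_on[OF bounded_linear_vec_nth])
      finally show "closed {z::real^'n. \<forall>i. 0 \<le> z$i}" .
    qed
    have z0Q: "z0 \<in> Q" unfolding Q_def using pos by auto
    have phiz0: "\<phi> z0 = z0" using phiid pos less_imp_le by blast
    define C where "C = connected_component_set U z0"
    define D where "D = connected_component_set (C \<inter> Q) z0"
    have z0U: "z0 \<in> U" using z0 phiz0 unfolding \<phi>_def by simp
    have z0C: "z0 \<in> C" unfolding C_def using z0U by simp
    have z0D: "z0 \<in> D" unfolding D_def using z0C z0Q by simp
    have oC: "open C" unfolding C_def using U by (rule open_connected_component)
    have cC: "connected C" unfolding C_def by simp
    have CU: "C \<subseteq> U" unfolding C_def using connected_component_subset by blast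
    have DCQ: "D \<subseteq> C \<inter> Q" unfolding D_def using connected_component_subset by blast
    have cD: "connected D" unfolding D_def by simp
    have phiD: "d \<in> D \<Longrightarrow> \<phi> d = d" for d
    proof -
      assume "d \<in> D"
      then have "\<forall>i. 0 < d$i" using DCQ unfolding Q_def by blast
      then show ?thesis using phiid less_imp_le by blast
    qed
    show ?thesis
    proof (cases "C \<inter> closure D \<subseteq> D")
      case True
      then have "D = C" using clopen_comp[OF oC cC oQ z0C z0Q] unfolding D_def by blast
      moreover have "\<not> bounded C" using comps z0U unfolding C_def by blast
      moreover have "D \<subseteq> {z. \<phi> z \<in> U}" using phiD DCQ CU by auto
      ultimately show ?thesis using unb_comp[OF cD z0D] unfolding \<phi>_def by blast
    next
      case False
      then obtain p where pC: "p \<in> C" and pD: "p \<in> closure D" and pnD: "p \<notin> D" by blast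
      have "p \<notin> Q" using closedin_comp_closure[of p "C \<inter> Q" z0] pC pD pnD unfolding D_def by blast
      then obtain i where pi: "\<not> 0 < p$i" unfolding Q_def by blast
      have "closure D \<subseteq> closure Q" using DCQ closure_mono by blast
      then have pnn: "\<forall>k. 0 \<le> p$k" using pD cQ by blast
      define R where "R = (\<lambda>t. p + t *\<^sub>R (- axis i 1)) ` {0..}"
      define Z where "Z = insert p D \<union> R"
      have pR: "p \<in> R" unfolding R_def by (rule image_eqI[of _ _ 0]) auto
      have c1: "connected (insert p D)"
        by (rule connected_intermediate_closure[OF cD]) (use pD closure_subset in auto)
      have cZ: "connected Z" unfolding Z_def
        by (rule connected_Un[OF c1]) (use ray_props(1)[OF ax] pR R_def in auto)
      have phip: "\<phi> p = p" using phiid pnn by blast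
      have "Z \<subseteq> {z. \<phi> z \<in> U}"
      proof
        fix z assume "z \<in> Z"
        then consider "z = p" | "z \<in> D" | "z \<in> R" unfolding Z_def by blast
        then show "z \<in> {z. \<phi> z \<in> U}"
        proof cases
          case 1 then show ?thesis using phip pC CU by auto
        next
          case 2 then show ?thesis using phiD DCQ CU by auto
        next
          case 3
          then obtain t where "t \<ge> 0" "z = p + t *\<^sub>R (- axis i 1)" unfolding R_def by auto
          moreover have "\<phi> (p + t *\<^sub>R (- axis i 1)) = \<phi> p" if "t \<ge> 0" for t
            by (rule phiray) (use pi pnn that in auto)
          ultimately show ?thesis using phip pC CU by auto
        qed
      qed
      moreover have "\<not> bounded Z" using ray_props(2)[OF ax, of p] unfolding Z_def R_def
        using bounded_subset by blast
      moreover have "z0 \<in> Z" unfolding Z_def using z0D by blast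
      ultimately show ?thesis using unb_comp[OF cZ] unfolding \<phi>_def by blast
    qed
  qed
qed



lemma main_ind:
  fixes e :: "nat \<Rightarrow> 'n::finite" and \<sigma> :: "real \<Rightarrow> real"
  assumes act: "(continuous_on UNIV \<sigma> \<and>
                   ((\<forall>s t. s < t \<longrightarrow> \<sigma> s < \<sigma> t) \<or> (\<forall>s t. s < t \<longrightarrow> \<sigma> s > \<sigma> t)))
                \<or> \<sigma> = (\<lambda>t. max t 0)"
    and e: "bij_betw e {..<CARD('n)} UNIV"
  shows "1 \<le> L \<Longrightarrow> d 0 = CARD('n) \<Longrightarrow> (\<forall>l\<in>{1..L}. d l \<le> CARD('n)) \<Longrightarrow>
    x \<in> decision_region (\<lambda>y::real^'n. nn_fun \<sigma> L d W b (\<lambda>k. y $ e k)) (d L) j \<Longrightarrow>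
    \<not> bounded (connected_component_set (decision_region (\<lambda>y::real^'n. nn_fun \<sigma> L d W b (\<lambda>k. y $ e k)) (d L) j) x)"
proof (induction L arbitrary: d W b x)
  case 0 then show ?case by simp
next
  case (Suc L')
  define n where "n = CARD('n)"
  define ie where "ie = inv_into {..<n} e"
  have ie_lt: "ie i < n" for i
    unfolding ie_def n_def using e by (metis bij_betw_def inv_into_into lessThan_iff UNIV_I)
  have e_ie: "e (ie i) = i" for i
    unfolding ie_def n_def using e by (metis bij_betw_def f_inv_into_f UNIV_I)
  have ie_e: "k < n \<Longrightarrow> ie (e k) = k" for k
    unfolding ie_def n_def using e by (metis bij_betw_def inv_into_f_f lessThan_iff)
  have sigcont: "continuous_on UNIV \<sigma>"
    using act by (auto intro!: continuous_intros)
  let ?R = "decision_region (\<lambda>y::real^'n. nn_fun \<sigma> (Suc L') d W b (\<lambda>k. y $ e k)) (d (Suc L')) j"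
  have d0: "d 0 = n" using Suc.prems n_def by simp
  show ?case
  proof (cases "L' = 0")
    case True
    define Fv where "Fv = (\<lambda>y::real^'n. nn_fun \<sigma> (Suc L') d W b (\<lambda>k. y $ e k))"
    have Fs: "Fv (s *\<^sub>R y) i = s * Fv y i" for s y i
      unfolding Fv_def nn_fun_def True by (simp add: sum_distrib_left mult_ac)
    show ?thesis
    proof (cases "x = 0")
      case True
      have "Fv 0 i = 0" for i using Fs[of 0 0 i] by simp
      then have "\<forall>k<d (Suc L'). k \<noteq> j \<longrightarrow> False" using Suc.prems(4) True
        unfolding decision_region_def Fv_def by auto
      then have "?R = UNIV" unfolding decision_region_def by auto
      then show ?thesis by simp
    next
      case False
      define Z where "Z = (\<lambda>t. x + t *\<^sub>R x) ` {0..}"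
      have "Z \<subseteq> ?R"
      proof
        fix z assume "z \<in> Z"
        then obtain t where t: "t \<ge> 0" "z = (1 + t) *\<^sub>R x" unfolding Z_def by (auto simp: algebra_simps)
        have "Fv x k < Fv x j" if "k < d (Suc L')" "k \<noteq> j" for k
          using Suc.prems(4) that unfolding decision_region_def Fv_def by auto
        then have "Fv z k < Fv z j" if "k < d (Suc L')" "k \<noteq> j" for k
          using that t Fs by (simp add: mult_strict_left_mono)
        then show "z \<in> ?R" unfolding decision_region_def Fv_def by auto
      qed
      moreover have "x \<in> Z" unfolding Z_def by (rule image_eqI[of _ _ 0]) auto
      ultimately show ?thesis using unb_comp[of Z x] ray_props[OF False, of x] unfolding Z_def by blast
    qed
  next
    case False
    then have L1: "L' \<ge> 1" by simp
    define A1 where "A1 = (\<lambda>v i. \<sigma> (affine (d 0) (W 1) (b 1) v i))"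
    define F' where "F' = (\<lambda>v. nn_fun \<sigma> L' (\<lambda>l. d (Suc l)) (\<lambda>l. W (Suc l)) (\<lambda>l. b (Suc l)) v)"
    have Fshift: "nn_fun \<sigma> (Suc L') d W b v = F' (A1 v)" for v
      unfolding F'_def A1_def by (rule nn_fun_shift[OF L1])
    have d1: "d 1 \<le> n" using Suc.prems(3) n_def by auto
    define lin where "lin = (\<lambda>u::real^'n. \<chi> i. if ie i < d 1 then (\<Sum>k<n. W 1 (ie i) k * u $ e k) else 0)"
    have linl: "linear lin"
      by (rule linearI) (auto simp: lin_def vec_eq_iff sum.distrib sum_distrib_left algebra_simps)
    show ?thesis
    proof (cases "inj lin")
      case False
      then obtain u where u: "u \<noteq> 0" "lin u = 0" using linl linear_injective_0 by blast
      have inv: "nn_fun \<sigma> (Suc L') d W b (\<lambda>k. (x' + t *\<^sub>R u) $ e k) = nn_fun \<sigma> (Suc L') d W b (\<lambda>k. x' $ e k)" for x' t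
      proof -
        have "(\<Sum>kk<n. W 1 k kk * u $ e kk) = 0" if "k < d 1" for k
        proof -
          have "lin u $ e k = 0" using u by simp
          then show ?thesis unfolding lin_def using ie_e[of k] that d1 by simp
        qed
        then have "\<forall>k<d 1. A1 (\<lambda>k. (x' + t *\<^sub>R u) $ e k) k = A1 (\<lambda>k. x' $ e k) k"
          unfolding A1_def affine_def d0 by (simp add: algebra_simps sum.distrib sum_distrib_left[symmetric])
        then show ?thesis unfolding Fshift F'_def by (intro nn_fun_cong) simp
      qed
      define Z where "Z = (\<lambda>t. x + t *\<^sub>R u) ` {0..}"
      have "Z \<subseteq> ?R" unfolding Z_def using Suc.prems(4) inv unfolding decision_region_def by auto
      moreover have "x \<in> Z" unfolding Z_def by (rule image_eqI[of _ _ 0]) auto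
      ultimately show ?thesis using unb_comp[of Z x] ray_props[OF u(1), of x] unfolding Z_def by blast
    next
      case True
      have surj: "surj lin" using linear_injective_imp_surjective[OF linl True] by simp
      have dn: "d 1 = n"
      proof (rule ccontr)
        assume "d 1 \<noteq> n"
        then have lt: "d 1 < n" using d1 by simp
        obtain u where "lin u = axis (e (d 1)) 1" using surj by (metis surjD)
        then have "lin u $ e (d 1) = 1" by simp
        moreover have "lin u $ e (d 1) = 0" unfolding lin_def using ie_e[OF lt] by simp
        ultimately show False by simp
      qed
      define c where "c = ((\<chi> i. b 1 (ie i)) :: real^'n)"
      define pre where "pre = (\<lambda>x. lin x + c)"
      define \<phi> where "\<phi> = (\<lambda>z::real^'n. \<chi> i. \<sigma> (z$i))"
      define R' where "R' = decision_region (\<lambda>h::real^'n. F' (\<lambda>k. h $ e k)) (d (Suc L')) j"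
      have key: "nn_fun \<sigma> (Suc L') d W b (\<lambda>k. y $ e k) = F' (\<lambda>k. \<phi> (pre y) $ e k)" for y
      proof -
        have "\<forall>k<d 1. A1 (\<lambda>k. y $ e k) k = \<phi> (pre y) $ e k"
          unfolding A1_def \<phi>_def pre_def lin_def c_def affine_def d0 using dn ie_e ie_lt by simp
        then show ?thesis unfolding Fshift F'_def by (intro nn_fun_cong) simp
      qed
      have Req: "?R = {y. \<phi> (pre y) \<in> R'}" unfolding R'_def decision_region_def key by simp
      have IH: "\<forall>h\<in>R'. \<not> bounded (connected_component_set R' h)"
        unfolding R'_def F'_def
        using Suc.IH[where d="\<lambda>l. d (Suc l)" and W="\<lambda>l. W (Suc l)" and b="\<lambda>l. b (Suc l)"] L1 dn Suc.prems(3) n_def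
        by auto
      have oR': "open R'" unfolding R'_def F'_def by (rule open_region[OF sigcont])
      define z0 where "z0 = pre x"
      have z0R: "\<phi> z0 \<in> R'" using Suc.prems(4) Req z0_def by blast
      have Zunb: "\<not> bounded (connected_component_set {z. \<phi> z \<in> R'} z0)"
        using act
      proof
        assume a: "continuous_on UNIV \<sigma> \<and> ((\<forall>s t. s < t \<longrightarrow> \<sigma> s < \<sigma> t) \<or> (\<forall>s t. s < t \<longrightarrow> \<sigma> t < \<sigma> s))"
        have "inj \<sigma>"
        proof (rule injI)
          fix s t assume "\<sigma> s = \<sigma> t"
          then show "s = t" using a by (metis less_irrefl linorder_neqE)
        qed
        then show ?thesis using mono_step[OF sigcont _ oR' IH] z0R unfolding \<phi>_def by blast
      next
        assume a: "\<sigma> = (\<lambda>t. max t 0)"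
        show ?thesis using relu_step[OF oR' IH] z0R unfolding \<phi>_def a by simp
      qed
      define Zc where "Zc = connected_component_set {z. \<phi> z \<in> R'} z0"
      obtain g where g: "linear g" "g \<circ> lin = id" using linear_injective_left_inverse[OF linl True] by blast
      have gl: "g (lin y) = y" for y using g(2) by (metis comp_apply id_apply)
      have lg: "lin (g w) = w" for w using surj gl by (metis surjD)
      define X where "X = (\<lambda>z. g (z - c)) ` Zc"
      have gc: "continuous_on UNIV g" using linear_continuous_on g(1) linear_conv_bounded_linear by blast
      have "continuous_on Zc (\<lambda>z. g (z - c))"
        by (rule continuous_on_compose2[OF gc, of Zc "\<lambda>z. z - c"]) (auto intro!: continuous_intros)
      then have "connected X" unfolding X_def
        by (rule connected_continuous_image) (simp add: Zc_def)
      moreover have "x \<in> X" unfolding X_def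
        by (rule image_eqI[of _ _ z0]) (use z0R in \<open>auto simp: Zc_def z0_def pre_def gl\<close>)
      moreover have "X \<subseteq> ?R"
      proof
        fix y assume "y \<in> X"
        then obtain z where "z \<in> Zc" "y = g (z - c)" unfolding X_def by blast
        moreover then have "\<phi> z \<in> R'" unfolding Zc_def using connected_component_subset by blast
        ultimately show "y \<in> ?R" unfolding Req pre_def by (simp add: lg)
      qed
      moreover have "\<not> bounded X"
      proof
        assume "bounded X"
        then have "bounded ((\<lambda>x. c + x) ` (lin ` X))"
          by (intro bounded_translation bounded_linear_image) (use linl linear_conv_bounded_linear in auto)
        moreover have "(\<lambda>x. c + x) ` (lin ` X) = Zc" unfolding X_def image_image by (simp add: lg)
        ultimately show False using Zunb Zc_def by simp
      qed
      ultimately show ?thesis using unb_comp by blast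
    qed
  qed
qed


theorem theorem10:
  fixes \<sigma> :: "real \<Rightarrow> real"
    and L :: nat and d :: "nat \<Rightarrow> nat"
    and W :: "nat \<Rightarrow> nat \<Rightarrow> nat \<Rightarrow> real" and b :: "nat \<Rightarrow> nat \<Rightarrow> real"
    and e :: "nat \<Rightarrow> 'n::finite"
  assumes act: "(continuous_on UNIV \<sigma> \<and>
                   ((\<forall>s t. s < t \<longrightarrow> \<sigma> s < \<sigma> t) \<or> (\<forall>s t. s < t \<longrightarrow> \<sigma> s > \<sigma> t)))
                \<or> \<sigma> = (\<lambda>t. max t 0)"
    and L: "L \<ge> 1"
    and din: "d 0 = CARD('n)"
    and e: "bij_betw e {..<CARD('n)} UNIV"
    and width: "nn_width L d \<le> d 0"
    and j: "j < d L"
    and x: "x \<in> decision_region (\<lambda>y. nn_fun \<sigma> L d W b (\<lambda>k. y $ e k)) (d L) j"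
  shows "\<not> bounded (connected_component_set
                 (decision_region (\<lambda>y. nn_fun \<sigma> L d W b (\<lambda>k. y $ e k)) (d L) j) x)"
proof -
  have "\<forall>l\<in>{1..L}. d l \<le> CARD('n)"
  proof
    fix l assume "l \<in> {1..L}"
    then have "d l \<le> Max (d ` {1..L})" by (intro Max_ge) auto
    then show "d l \<le> CARD('n)" using width din unfolding nn_width_def by simp
  qed
  then show ?thesis using main_ind[OF act e, where L=L and d=d and W=W and b=b and x=x and j=j] L din x by blast
qed

end
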